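(* Let $p$ be an odd prime, let $\nu>0$ and $r\geq0$ be integers, let $n'$ be an odd positive integer with $p\nmid n'$, and let $l$ be a positive integer. If there exists a Euclidean self-dual negacyclic code of length $2^\nu p^r n'$ over $\mathbb{F}_{p^l}$, then there exists a Euclidean self-dual negacyclic code of length $2^\mu p^r n'$ over $\mathbb{F}_{p^l}$ for every integer $\mu\geq\nu$.
   Context: A linear code of length $n$ over $\mathbb{F}_q$ is a subspace of $\mathbb{F}_q^n$; it is negacyclic if $(-c_{n-1},c_0,\dots,c_{n-2})\in C$ whenever $(c_0,\dots,c_{n-1})\in C$. The Euclidean dual is $C^{\perp_E}=\{v : \sum_i v_ic_i=0\ \forall c\in C\}$, and $C$ is Euclidean self-dual if $C=C^{\perp_E}$. *)

theory Defs
  imports "HOL-Computational_Algebra.Primes"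
begin

definition words :: "nat \<Rightarrow> (nat \<Rightarrow> 'a::field) set" where
  "words n = {v. \<forall>i\<ge>n. v i = 0}"

definition linear_code :: "nat \<Rightarrow> (nat \<Rightarrow> 'a::field) set \<Rightarrow> bool" where
  "linear_code n C \<longleftrightarrow> C \<subseteq> words n \<and> (\<lambda>_. 0) \<in> C \<and>
     (\<forall>x\<in>C. \<forall>y\<in>C. (\<lambda>i. x i + y i) \<in> C) \<and>
     (\<forall>a. \<forall>x\<in>C. (\<lambda>i. a * x i) \<in> C)"

definition nega_shift :: "nat \<Rightarrow> (nat \<Rightarrow> 'a::field) \<Rightarrow> (nat \<Rightarrow> 'a)" where
  "nega_shift n c = (\<lambda>i. if i = 0 then - c (n - 1) else if i < n then c (i - 1) else 0)"

definition negacyclic_code :: "nat \<Rightarrow> (nat \<Rightarrow> 'a::field) set \<Rightarrow> bool" where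
  "negacyclic_code n C \<longleftrightarrow> linear_code n C \<and> (\<forall>c\<in>C. nega_shift n c \<in> C)"

definition euclid_dual :: "nat \<Rightarrow> (nat \<Rightarrow> 'a::field) set \<Rightarrow> (nat \<Rightarrow> 'a) set" where
  "euclid_dual n C = {v \<in> words n. \<forall>c\<in>C. (\<Sum>i<n. v i * c i) = 0}"

definition euclid_self_dual :: "nat \<Rightarrow> (nat \<Rightarrow> 'a::field) set \<Rightarrow> bool" where
  "euclid_self_dual n C \<longleftrightarrow> C = euclid_dual n C"

end

theory Submission
  imports Defs
begin

lemma sum_double: "(\<Sum>i<2*n. f i) = (\<Sum>i<n. f (2*i) + f (2*i+1))" for f :: "nat \<Rightarrow> 'b::comm_monoid_add"
  by (induct n) (auto simp: ac_simps)

lemma double_code: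
  fixes C :: "(nat \<Rightarrow> 'a::field) set"
  assumes n: "n > 0" and neg: "negacyclic_code n C" and sd: "euclid_self_dual n C"
  shows "\<exists>C' :: (nat \<Rightarrow> 'a) set. negacyclic_code (2*n) C' \<and> euclid_self_dual (2*n) C'"
proof -
  define C' where "C' = {v \<in> words (2*n). (\<lambda>i. v (2*i)) \<in> C \<and> (\<lambda>i. v (2*i+1)) \<in> C}"
  have lin: "linear_code n C" and sh: "\<And>c. c \<in> C \<Longrightarrow> nega_shift n c \<in> C"
    using neg unfolding negacyclic_code_def by auto
  have Cw: "C \<subseteq> words n" and C0: "(\<lambda>_. 0) \<in> C"
    and Cadd: "\<And>x y. x \<in> C \<Longrightarrow> y \<in> C \<Longrightarrow> (\<lambda>i. x i + y i) \<in> C"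
    and Csc: "\<And>a x. x \<in> C \<Longrightarrow> (\<lambda>i. a * x i) \<in> C"
    using lin unfolding linear_code_def by auto
  have Cd: "C = euclid_dual n C" using sd unfolding euclid_self_dual_def .
  have orth: "\<And>x y. x \<in> C \<Longrightarrow> y \<in> C \<Longrightarrow> (\<Sum>i<n. x i * y i) = 0"
    using Cd unfolding euclid_dual_def by blast
  have lin': "linear_code (2*n) C'"
    unfolding linear_code_def C'_def words_def
    using C0 Cadd Csc by auto
  have sh': "nega_shift (2*n) v \<in> C'" if v: "v \<in> C'" for v
  proof -
    let ?w = "nega_shift (2*n) v"
    have vw: "v \<in> words (2*n)" and ev: "(\<lambda>i. v (2*i)) \<in> C" and od: "(\<lambda>i. v (2*i+1)) \<in> C"
      using v unfolding C'_def by auto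
    have "(\<lambda>i. ?w (2*i)) = nega_shift n (\<lambda>i. v (2*i+1))"
    proof
      fix i
      have e: "2*(n-1)+1 = 2*n-1" using n by simp
      show "?w (2*i) = nega_shift n (\<lambda>i. v (2*i+1)) i"
        unfolding nega_shift_def using e
        using n by (cases i) auto
    qed
    moreover have "(\<lambda>i. ?w (2*i+1)) = (\<lambda>i. v (2*i))"
    proof
      fix i
      show "?w (2*i+1) = v (2*i)"
        using vw unfolding nega_shift_def words_def by auto
    qed
    moreover have "?w \<in> words (2*n)" using n unfolding nega_shift_def words_def by auto
    ultimately show ?thesis using sh[OF od] ev unfolding C'_def by auto
  qed
  have ip: "(\<Sum>i<2*n. v i * c i) = (\<Sum>i<n. v (2*i) * c (2*i)) + (\<Sum>i<n. v (2*i+1) * c (2*i+1))"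
    for v c :: "nat \<Rightarrow> 'a"
    by (simp add: sum_double sum.distrib)
  have "C' = euclid_dual (2*n) C'"
  proof
    show "C' \<subseteq> euclid_dual (2*n) C'"
    proof
      fix v assume v: "v \<in> C'"
      have "(\<Sum>i<2*n. v i * c i) = 0" if c: "c \<in> C'" for c
        using v c unfolding ip C'_def by (simp add: orth)
      then show "v \<in> euclid_dual (2*n) C'" using v unfolding euclid_dual_def C'_def by auto
    qed
  next
    show "euclid_dual (2*n) C' \<subseteq> C'"
    proof
      fix v assume v: "v \<in> euclid_dual (2*n) C'"
      hence vw: "v \<in> words (2*n)" and vo: "\<And>c. c \<in> C' \<Longrightarrow> (\<Sum>i<2*n. v i * c i) = 0"
        unfolding euclid_dual_def by auto
      have evw: "(\<lambda>i. v (2*i)) \<in> words n" "(\<lambda>i. v (2*i+1)) \<in> words n"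
        using vw unfolding words_def by auto
      have "(\<lambda>i. v (2*i)) \<in> euclid_dual n C"
        unfolding euclid_dual_def
      proof (intro CollectI conjI ballI evw)
        fix c assume c: "c \<in> C"
        define u where "u = (\<lambda>j. if even j then c (j div 2) else (0::'a))"
        have "u \<in> words (2*n)" unfolding u_def words_def
        proof (intro CollectI allI impI)
          fix i :: nat assume "2*n \<le> i"
          hence "n \<le> i div 2" by linarith
          hence "c (i div 2) = 0" using c Cw unfolding words_def by auto
          thus "(\<lambda>j. if even j then c (j div 2) else (0::'a)) i = 0" by simp
        qed
        moreover have "(\<lambda>i. u (2*i)) = c" "(\<lambda>i. u (2*i+1)) = (\<lambda>_. 0)"
          unfolding u_def by auto
        ultimately have "u \<in> C'" using c C0 unfolding C'_def by auto
        from vo[OF this] show "(\<Sum>i<n. v (2*i) * c i) = 0"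
          unfolding ip by (simp add: u_def)
      qed
      moreover have "(\<lambda>i. v (2*i+1)) \<in> euclid_dual n C"
        unfolding euclid_dual_def
      proof (intro CollectI conjI ballI evw)
        fix c assume c: "c \<in> C"
        define u where "u = (\<lambda>j. if odd j then c (j div 2) else (0::'a))"
        have "u \<in> words (2*n)" unfolding u_def words_def
        proof (intro CollectI allI impI)
          fix i :: nat assume "2*n \<le> i"
          hence "n \<le> i div 2" by linarith
          hence "c (i div 2) = 0" using c Cw unfolding words_def by auto
          thus "(\<lambda>j. if odd j then c (j div 2) else (0::'a)) i = 0" by simp
        qed
        moreover have "(\<lambda>i. u (2*i+1)) = c" "(\<lambda>i. u (2*i)) = (\<lambda>_. 0)"
          unfolding u_def by auto
        ultimately have "u \<in> C'" using c C0 unfolding C'_def by auto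
        from vo[OF this] show "(\<Sum>i<n. v (2*i+1) * c i) = 0"
          unfolding ip by (simp add: u_def)
      qed
      ultimately show "v \<in> C'" using vw Cd unfolding C'_def by auto
    qed
  qed
  then show ?thesis using lin' sh'
    unfolding negacyclic_code_def euclid_self_dual_def by blast
qed

theorem corollary3p4:
  fixes p \<nu> r n' l :: nat
  assumes "prime p" and "odd p" and "\<nu> > 0" and "odd n'" and "n' > 0"
    and "\<not> p dvd n'" and "l > 0"
    and "card (UNIV :: ('a::{finite,field}) set) = p ^ l"
    and "\<exists>C :: (nat \<Rightarrow> 'a) set. negacyclic_code (2^\<nu> * p^r * n') C
            \<and> euclid_self_dual (2^\<nu> * p^r * n') C"
  shows "\<forall>\<mu>\<ge>\<nu>. \<exists>C :: (nat \<Rightarrow> 'a) set. negacyclic_code (2^\<mu> * p^r * n') C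
            \<and> euclid_self_dual (2^\<mu> * p^r * n') C"
proof (intro allI impI)
  fix \<mu> assume "\<nu> \<le> \<mu>"
  then show "\<exists>C :: (nat \<Rightarrow> 'a) set. negacyclic_code (2^\<mu> * p^r * n') C
            \<and> euclid_self_dual (2^\<mu> * p^r * n') C"
  proof (induct rule: dec_induct)
    case base then show ?case using assms(9) by blast
  next
    case (step m)
    then obtain C :: "(nat \<Rightarrow> 'a) set" where "negacyclic_code (2^m * p^r * n') C"
      "euclid_self_dual (2^m * p^r * n') C" by blast
    moreover have "2^m * p^r * n' > 0" using assms(1,5) prime_gt_0_nat by auto
    ultimately have "\<exists>C' :: (nat \<Rightarrow> 'a) set. negacyclic_code (2*(2^m * p^r * n')) C' \<and> euclid_self_dual (2*(2^m * p^r * n')) C'"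
      using double_code by blast
    then show ?case by (simp add: mult.assoc)
  qed
qed

end
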